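(* Let $G=(A\cup B,E)$ be a bipartite graph with orderings $\sigma_A=(a_1,\ldots,a_n)$ of $A$ and $\sigma_B=(b_1,\ldots,b_m)$ of $B$, and let $M$ be the ordered bipartite adjacency matrix with rows $a_1,\ldots,a_n$, columns $b_1,\ldots,b_m$, and entry $m_{i,p}=1$ if $a_ib_p\in E$ and $0$ otherwise. Then $G$ admits a Stick representation respecting $\sigma_A$ and $\sigma_B$ if and only if $M$ contains none of the following ordered submatrices (where $*$ denotes an arbitrary entry $0$ or $1$): (P1) rows $i<j<k$ and columns $p<q<r$ with $m_{i,q}=1$, $m_{j,q}=0$, $m_{j,r}=1$, $m_{k,p}=1$; (P2) rows $i<j<k$ and columns $p<q$ with $m_{i,p}=1$, $m_{j,p}=0$, $m_{j,q}=1$, $m_{k,p}=1$; (P3) rows $i<j$ and columns $p<q<r$ with $m_{i,q}=1$, $m_{j,p}=1$, $m_{j,q}=0$, $m_{j,r}=1$. That is, the forbidden patterns are $P_1=\begin{bmatrix} * & 1 & * \\ * & 0 & 1 \\ 1 & * & * \end{bmatrix}$, $P_2=\begin{bmatrix} 1 & * \\ 0 & 1 \\ 1 & * \end{bmatrix}$, $P_3=\begin{bmatrix} * & 1 & * \\ 1 & 0 & 1 \end{bmatrix}$, with rows and columns taken in the given order.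
   Context: A Stick representation of a bipartite graph $G=(A\cup B,E)$ (with $A$ horizontal and $B$ vertical) assigns to each vertex of $A$ a horizontal segment and to each vertex of $B$ a vertical segment such that the left endpoints of all horizontal segments and the bottom endpoints of all vertical segments lie on a fixed ground line $\ell$ of slope $-1$, and a horizontal and a vertical segment intersect if and only if the corresponding vertices are adjacent in $G$. The representation respects $\sigma_A$ and $\sigma_B$ if, ordering the points where segments touch $\ell$ from left to right, the $i$th horizontal segment corresponds to the $i$th vertex of $\sigma_A$ and the $j$th vertical segment corresponds to the $j$th vertex of $\sigma_B$. An ordered submatrix uses a subset of rows and a subset of columns in their original relative order. *)

theory Defs
  imports Main "HOL.Real"
begin

text \<open>Ground line: the line y = -x (slope -1); a point on it is (x, -x), and
  "left to right" along the line means increasing x.\<close>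

definition hseg :: "real \<Rightarrow> real \<Rightarrow> (real \<times> real) set" where
  "hseg x h = {(t, - x) | t. x \<le> t \<and> t \<le> x + h}"

definition vseg :: "real \<Rightarrow> real \<Rightarrow> (real \<times> real) set" where
  "vseg x v = {(x, s) | s. - x \<le> s \<and> s \<le> - x + v}"

definition stick_rep ::
  "'a list \<Rightarrow> 'b list \<Rightarrow> ('a \<Rightarrow> 'b \<Rightarrow> bool) \<Rightarrow>
   ('a \<Rightarrow> real) \<Rightarrow> ('a \<Rightarrow> real) \<Rightarrow> ('b \<Rightarrow> real) \<Rightarrow> ('b \<Rightarrow> real) \<Rightarrow> bool" where
  "stick_rep sA sB E xa ha xb vb \<longleftrightarrow>
     (\<forall>a\<in>set sA. ha a > 0) \<and> (\<forall>b\<in>set sB. vb b > 0) \<and>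
     (\<forall>i j. i < j \<and> j < length sA \<longrightarrow> xa (sA ! i) < xa (sA ! j)) \<and>
     (\<forall>p q. p < q \<and> q < length sB \<longrightarrow> xb (sB ! p) < xb (sB ! q)) \<and>
     (\<forall>a\<in>set sA. \<forall>b\<in>set sB. xa a \<noteq> xb b) \<and>
     (\<forall>a\<in>set sA. \<forall>b\<in>set sB.
        E a b \<longleftrightarrow> hseg (xa a) (ha a) \<inter> vseg (xb b) (vb b) \<noteq> {})"

definition has_stick_rep :: "'a list \<Rightarrow> 'b list \<Rightarrow> ('a \<Rightarrow> 'b \<Rightarrow> bool) \<Rightarrow> bool" where
  "has_stick_rep sA sB E \<longleftrightarrow> (\<exists>xa ha xb vb. stick_rep sA sB E xa ha xb vb)"

text \<open>Ordered bipartite adjacency matrix (0-based indices; True = entry 1).\<close>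

definition adj_mat :: "'a list \<Rightarrow> 'b list \<Rightarrow> ('a \<Rightarrow> 'b \<Rightarrow> bool) \<Rightarrow> nat \<Rightarrow> nat \<Rightarrow> bool" where
  "adj_mat sA sB E i p = E (sA ! i) (sB ! p)"

definition has_P1 :: "nat \<Rightarrow> nat \<Rightarrow> (nat \<Rightarrow> nat \<Rightarrow> bool) \<Rightarrow> bool" where
  "has_P1 n m M \<longleftrightarrow> (\<exists>i j k p q r. i < j \<and> j < k \<and> k < n \<and> p < q \<and> q < r \<and> r < m \<and>
      M i q \<and> \<not> M j q \<and> M j r \<and> M k p)"

definition has_P2 :: "nat \<Rightarrow> nat \<Rightarrow> (nat \<Rightarrow> nat \<Rightarrow> bool) \<Rightarrow> bool" where
  "has_P2 n m M \<longleftrightarrow> (\<exists>i j k p q. i < j \<and> j < k \<and> k < n \<and> p < q \<and> q < m \<and>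
      M i p \<and> \<not> M j p \<and> M j q \<and> M k p)"

definition has_P3 :: "nat \<Rightarrow> nat \<Rightarrow> (nat \<Rightarrow> nat \<Rightarrow> bool) \<Rightarrow> bool" where
  "has_P3 n m M \<longleftrightarrow> (\<exists>i j p q r. i < j \<and> j < n \<and> p < q \<and> q < r \<and> r < m \<and>
      M i q \<and> M j p \<and> \<not> M j q \<and> M j r)"

end

theory Submission
  imports Defs
begin

lemma inter_iff:
  "hseg x h \<inter> vseg y v \<noteq> {} \<longleftrightarrow> x \<le> y \<and> y - x \<le> h \<and> y - x \<le> v"
proof
  assume "hseg x h \<inter> vseg y v \<noteq> {}"
  then obtain z where "z \<in> hseg x h" "z \<in> vseg y v" by blast
  then show "x \<le> y \<and> y - x \<le> h \<and> y - x \<le> v"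
    unfolding hseg_def vseg_def by auto
next
  assume "x \<le> y \<and> y - x \<le> h \<and> y - x \<le> v"
  then have "(y, -x) \<in> hseg x h \<inter> vseg y v"
    unfolding hseg_def vseg_def by auto
  then show "hseg x h \<inter> vseg y v \<noteq> {}" by blast
qed

definition irep :: "nat \<Rightarrow> nat \<Rightarrow> (nat \<Rightarrow> nat \<Rightarrow> bool) \<Rightarrow> (nat \<Rightarrow> real) \<Rightarrow> (nat \<Rightarrow> real)
   \<Rightarrow> (nat \<Rightarrow> real) \<Rightarrow> (nat \<Rightarrow> real) \<Rightarrow> bool" where
  "irep n m M X H Y V \<longleftrightarrow> (\<forall>i<n. H i > 0) \<and> (\<forall>p<m. V p > 0) \<and>
     (\<forall>i j. i < j \<and> j < n \<longrightarrow> X i < X j) \<and> (\<forall>p q. p < q \<and> q < m \<longrightarrow> Y p < Y q) \<and>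
     (\<forall>i<n. \<forall>p<m. X i \<noteq> Y p) \<and>
     (\<forall>i<n. \<forall>p<m. M i p \<longleftrightarrow> X i \<le> Y p \<and> Y p - X i \<le> H i \<and> Y p - X i \<le> V p)"

lemma necessity:
  assumes "irep n m M X H Y V"
  shows "\<not> has_P1 n m M \<and> \<not> has_P2 n m M \<and> \<not> has_P3 n m M"
proof (intro conjI notI)
  assume "has_P1 n m M"
  then obtain i j k p q r where h: "i < j" "j < k" "k < n" "p < q" "q < r" "r < m"
      "M i q" "\<not> M j q" "M j r" "M k p" unfolding has_P1_def by blast
  have X1: "X i < X j" "X j < X k" and Y1: "Y p < Y q" "Y q < Y r"
    using assms h unfolding irep_def by auto
  have a: "X k \<le> Y p" using assms h unfolding irep_def by auto
  have b: "Y q - X i \<le> V q" using assms h unfolding irep_def by (meson less_trans)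
  have c: "Y r - X j \<le> H j" using assms h unfolding irep_def by (meson less_trans)
  have "M j q" using assms h X1 Y1 a b c unfolding irep_def
    by (smt (verit, best) less_trans)
  then show False using h by blast
next
  assume "has_P2 n m M"
  then obtain i j k p q where h: "i < j" "j < k" "k < n" "p < q" "q < m"
      "M i p" "\<not> M j p" "M j q" "M k p" unfolding has_P2_def by blast
  have X1: "X i < X j" "X j < X k" and Y1: "Y p < Y q"
    using assms h unfolding irep_def by auto
  have a: "X k \<le> Y p" using assms h unfolding irep_def by auto
  have b: "Y p - X i \<le> V p" using assms h unfolding irep_def by (meson less_trans)
  have c: "Y q - X j \<le> H j" using assms h unfolding irep_def by (meson less_trans)
  have "M j p" using assms h X1 Y1 a b c unfolding irep_def
    by (smt (verit, best) less_trans)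
  then show False using h by blast
next
  assume "has_P3 n m M"
  then obtain i j p q r where h: "i < j" "j < n" "p < q" "q < r" "r < m"
      "M i q" "M j p" "\<not> M j q" "M j r" unfolding has_P3_def by blast
  have X1: "X i < X j" and Y1: "Y p < Y q" "Y q < Y r"
    using assms h unfolding irep_def by auto
  have a: "X j \<le> Y p" using assms h unfolding irep_def by (meson less_trans)
  have b: "Y q - X i \<le> V q" using assms h unfolding irep_def by (meson less_trans)
  have c: "Y r - X j \<le> H j" using assms h unfolding irep_def by (meson less_trans)
  have "M j q" using assms h X1 Y1 a b c unfolding irep_def
    by (smt (verit, best) less_trans)
  then show False using h by blast
qed


lemma sufficiency:
  assumes n1: "\<not> has_P1 n m M" and n2: "\<not> has_P2 n m M" and n3: "\<not> has_P3 n m M"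
  shows "\<exists>X H Y V. irep n m M X H Y V"
proof -
  define Q where "Q i p \<longleftrightarrow> (\<exists>k p'. i \<le> k \<and> k < n \<and> p' \<le> p \<and> M k p')" for i p
  define c where "c p = card {i. i < n \<and> Q i p}" for p
  define X :: "nat \<Rightarrow> real" where "X i = real i" for i
  define Y :: "nat \<Rightarrow> real" where "Y p = real (c p) - 1/2 + real p / (2 * real m + 2)" for p
  define H where "H i = Max (insert (1/4) ((\<lambda>p. Y p - X i) ` {p. p < m \<and> M i p}))" for i
  define V where "V p = Max (insert (1/4) ((\<lambda>i. Y p - X i) ` {i. i < n \<and> M i p}))" for p
  have F1: "Q i p \<longleftrightarrow> i < c p" if "i < n" for i p
  proof
    assume q: "Q i p"
    have "{..i} \<subseteq> {i. i < n \<and> Q i p}"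
      using q that unfolding Q_def by (auto, meson le_trans)
    then have "card {..i} \<le> c p" unfolding c_def by (intro card_mono) auto
    then show "i < c p" by simp
  next
    assume "i < c p"
    show "Q i p"
    proof (rule ccontr)
      assume nq: "\<not> Q i p"
      have "{i. i < n \<and> Q i p} \<subseteq> {..<i}"
      proof
        fix j assume "j \<in> {i. i < n \<and> Q i p}"
        then have "j < n" "Q j p" by auto
        then show "j \<in> {..<i}" using nq unfolding Q_def
          by (metis lessThan_iff not_le_imp_less order.trans)
      qed
      then have "c p \<le> card {..<i}" unfolding c_def by (intro card_mono) auto
      then show False using \<open>i < c p\<close> by simp
    qed
  qed
  have F2: "c p \<le> c q" if "p \<le> q" for p q
    unfolding c_def using that by (intro card_mono) (auto simp: Q_def, meson le_trans)
  have F3: "0 \<le> real p / (2 * real m + 2) \<and> real p / (2 * real m + 2) < 1/2" if "p < m" for p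
  proof -
    have "real p < real m" using that by simp
    then show ?thesis by (simp add: divide_simps)
  qed
  have Ymono: "Y p < Y q" if "p < q" "q < m" for p q
  proof -
    have "real (c p) \<le> real (c q)" using F2[of p q] that by simp
    moreover have "real p / (2 * real m + 2) < real q / (2 * real m + 2)"
      using that by (simp add: divide_strict_right_mono)
    ultimately show ?thesis unfolding Y_def by simp
  qed
  have Yle: "Y p \<le> Y q \<Longrightarrow> p < m \<Longrightarrow> q < m \<Longrightarrow> p \<le> q" for p q
    using Ymono by (meson leD not_le_imp_less)
  have G1: "Y p - X i \<ge> 1/2" if "i < c p" "p < m" for i p
  proof -
    have "real i + 1 \<le> real (c p)" using that by simp
    then show ?thesis using F3[OF that(2)] unfolding Y_def X_def by linarith
  qed
  have G2: "Y p < X i" if "\<not> i < c p" "p < m" for i p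
  proof -
    have "real (c p) \<le> real i" using that by simp
    then show ?thesis using F3[OF that(2)] unfolding Y_def X_def by linarith
  qed
  have finH: "finite (insert (1/4) ((\<lambda>p. Y p - X i) ` {p. p < m \<and> M i p}))" for i by simp
  have finV: "finite (insert (1/4) ((\<lambda>i. Y p - X i) ` {i. i < n \<and> M i p}))" for p by simp
  have Hge: "H i \<ge> 1/4" for i unfolding H_def using finH by (intro Max_ge) auto
  have Vge: "V p \<ge> 1/4" for p unfolding V_def using finV by (intro Max_ge) auto
  have Hge2: "Y p - X i \<le> H i" if "p < m" "M i p" for i p
    unfolding H_def using finH that by (intro Max_ge) auto
  have Vge2: "Y p - X i \<le> V p" if "i < n" "M i p" for i p
    unfolding V_def using finV that by (intro Max_ge) auto
  have Hin: "H i \<in> insert (1/4) ((\<lambda>p. Y p - X i) ` {p. p < m \<and> M i p})" for i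
    unfolding H_def using finH by (intro Max_in) auto
  have Vin: "V p \<in> insert (1/4) ((\<lambda>i. Y p - X i) ` {i. i < n \<and> M i p})" for p
    unfolding V_def using finV by (intro Max_in) auto
  have main: "M i p \<longleftrightarrow> X i \<le> Y p \<and> Y p - X i \<le> H i \<and> Y p - X i \<le> V p"
    if i: "i < n" and p: "p < m" for i p
  proof
    assume "M i p"
    then have "Q i p" unfolding Q_def using i by blast
    then have "i < c p" using F1 i by blast
    then show "X i \<le> Y p \<and> Y p - X i \<le> H i \<and> Y p - X i \<le> V p"
      using G1[OF _ p] Hge2[OF p \<open>M i p\<close>] Vge2[OF i \<open>M i p\<close>] by fastforce
  next
    assume a: "X i \<le> Y p \<and> Y p - X i \<le> H i \<and> Y p - X i \<le> V p"
    show "M i p"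
    proof (rule ccontr)
      assume nm: "\<not> M i p"
      have ic: "i < c p" using a G2[OF _ p] by force
      then have d: "Y p - X i \<ge> 1/2" using G1 p by blast
      then have q: "Q i p" using F1 i ic by blast
      have "H i \<noteq> 1/4" using a d by linarith
      then obtain r where r: "r < m" "M i r" "H i = Y r - X i" using Hin[of i] by auto
      have "Y p \<le> Y r" using a r by linarith
      then have "p \<le> r" using Yle p r by blast
      then have pr: "p < r" using nm r by (metis le_neq_implies_less)
      have "V p \<noteq> 1/4" using a d by linarith
      then obtain i' where i': "i' < n" "M i' p" "V p = Y p - X i'" using Vin[of p] by auto
      have "X i' \<le> X i" using a i' by linarith
      then have "i' \<le> i" unfolding X_def by simp
      then have ii: "i' < i" using nm i' by (metis le_neq_implies_less)
      obtain k p' where kp: "i \<le> k" "k < n" "p' \<le> p" "M k p'" using q unfolding Q_def by blast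
      show False
      proof (cases "k = i")
        case True
        then have "p' < p" using kp nm le_neq_implies_less by blast
        then have "has_P3 n m M" unfolding has_P3_def
          using ii i pr r i' kp True nm by blast
        then show False using n3 by blast
      next
        case False
        then have ik: "i < k" using kp by simp
        show False
        proof (cases "p' = p")
          case True
          then have "has_P2 n m M" unfolding has_P2_def
            using ii ik kp pr r i' nm by blast
          then show False using n2 by blast
        next
          case False
          then have "p' < p" using kp by simp
          then have "has_P1 n m M" unfolding has_P1_def
            using ii ik kp pr r i' nm by blast
          then show False using n1 by blast
        qed
      qed
    qed
  qed
  have "irep n m M X H Y V" unfolding irep_def
  proof (intro conjI allI impI ballI)
    show "\<And>i. i < n \<Longrightarrow> 0 < H i" using Hge by (meson less_le_trans zero_less_divide_1_iff zero_less_numeral)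
    show "\<And>p. p < m \<Longrightarrow> 0 < V p" using Vge by (meson less_le_trans zero_less_divide_1_iff zero_less_numeral)
    show "\<And>i j. i < j \<and> j < n \<Longrightarrow> X i < X j" unfolding X_def by simp
    show "\<And>p q. p < q \<and> q < m \<Longrightarrow> Y p < Y q" using Ymono by blast
    show "\<And>i p. i < n \<Longrightarrow> p < m \<Longrightarrow> X i \<noteq> Y p"
      proof -
      fix i p assume "i < n" "p < m"
      show "X i \<noteq> Y p"
      proof (cases "i < c p")
        case True then show ?thesis using G1[OF True \<open>p < m\<close>] by auto
      next
        case False then show ?thesis using G2[OF False \<open>p < m\<close>] by auto
      qed
    qed
    show "\<And>i p. i < n \<Longrightarrow> p < m \<Longrightarrow> M i p = (X i \<le> Y p \<and> Y p - X i \<le> H i \<and> Y p - X i \<le> V p)"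
      using main by blast
  qed
  then show ?thesis by blast
qed


lemma transfer:
  assumes dA: "distinct sA" and dB: "distinct sB"
  shows "has_stick_rep sA sB E \<longleftrightarrow>
    (\<exists>X H Y V. irep (length sA) (length sB) (adj_mat sA sB E) X H Y V)"
proof
  assume "has_stick_rep sA sB E"
  then obtain xa ha xb vb where s: "stick_rep sA sB E xa ha xb vb"
    unfolding has_stick_rep_def by blast
  have "irep (length sA) (length sB) (adj_mat sA sB E)
     (\<lambda>i. xa (sA ! i)) (\<lambda>i. ha (sA ! i)) (\<lambda>p. xb (sB ! p)) (\<lambda>p. vb (sB ! p))"
    using s unfolding irep_def stick_rep_def adj_mat_def inter_iff
    by (auto simp: nth_mem)
  then show "\<exists>X H Y V. irep (length sA) (length sB) (adj_mat sA sB E) X H Y V" by blast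
next
  assume "\<exists>X H Y V. irep (length sA) (length sB) (adj_mat sA sB E) X H Y V"
  then obtain X H Y V where r: "irep (length sA) (length sB) (adj_mat sA sB E) X H Y V"
    by blast
  define ia where "ia = inv_into {..<length sA} (nth sA)"
  define ib where "ib = inv_into {..<length sB} (nth sB)"
  have injA: "inj_on (nth sA) {..<length sA}" using dA by (simp add: inj_on_nth)
  have injB: "inj_on (nth sB) {..<length sB}" using dB by (simp add: inj_on_nth)
  have ia: "ia (sA ! i) = i" if "i < length sA" for i
    unfolding ia_def using inv_into_f_f[OF injA] that by simp
  have ib: "ib (sB ! i) = i" if "i < length sB" for i
    unfolding ib_def using inv_into_f_f[OF injB] that by simp
  have "stick_rep sA sB E (\<lambda>a. X (ia a)) (\<lambda>a. H (ia a)) (\<lambda>b. Y (ib b)) (\<lambda>b. V (ib b))"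
    unfolding stick_rep_def
  proof (intro conjI ballI allI impI)
    fix a assume "a \<in> set sA"
    then obtain i where "i < length sA" "a = sA ! i" by (auto simp: in_set_conv_nth)
    then show "H (ia a) > 0" using r ia unfolding irep_def by auto
  next
    fix b assume "b \<in> set sB"
    then obtain i where "i < length sB" "b = sB ! i" by (auto simp: in_set_conv_nth)
    then show "V (ib b) > 0" using r ib unfolding irep_def by auto
  next
    fix i j assume "i < j \<and> j < length sA"
    then show "X (ia (sA ! i)) < X (ia (sA ! j))" using r ia unfolding irep_def by auto
  next
    fix i j assume "i < j \<and> j < length sB"
    then show "Y (ib (sB ! i)) < Y (ib (sB ! j))" using r ib unfolding irep_def by auto
  next
    fix a b assume "a \<in> set sA" "b \<in> set sB"
    then obtain i p where ip: "i < length sA" "a = sA ! i" "p < length sB" "b = sB ! p"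
      by (auto simp: in_set_conv_nth)
    show "X (ia a) \<noteq> Y (ib b)" using r ip ia ib unfolding irep_def by auto
    show "E a b \<longleftrightarrow> hseg (X (ia a)) (H (ia a)) \<inter> vseg (Y (ib b)) (V (ib b)) \<noteq> {}"
      using r ip ia ib unfolding irep_def inter_iff adj_mat_def by auto
  qed
  then show "has_stick_rep sA sB E" unfolding has_stick_rep_def by blast
qed

theorem theorem2:
  fixes sA :: "'a list" and sB :: "'b list" and E :: "'a \<Rightarrow> 'b \<Rightarrow> bool"
  assumes "distinct sA" and "distinct sB"
  shows "has_stick_rep sA sB E \<longleftrightarrow>
    (let n = length sA; m = length sB; M = adj_mat sA sB E in
      \<not> has_P1 n m M \<and> \<not> has_P2 n m M \<and> \<not> has_P3 n m M)"
  unfolding transfer[OF assms] Let_def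
  using necessity sufficiency by blast

end
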